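(* Every nonempty open subset $U\subset \mathbb{R}^{\mathbb{N}}$ satisfies $\mu(U)=\infty$.
   Context: $\mathbb{R}^{\mathbb{N}}$ carries the product topology. Let $\mathcal{B}$ be the Borel $\sigma$-algebra of $\mathbb{R}$, $\lambda$ the Lebesgue measure, and $\mathcal{B}_{\infty}$ the $\sigma$-algebra on $\mathbb{R}^{\mathbb{N}}$ generated by the cylinder sets $\prod_{i=1}^{m}C_{i}\times\prod_{i=m+1}^{\infty}\mathbb{R}$ with $C_i\in\mathcal{B}$, $m\in\mathbb{N}$ (equal to the Borel $\sigma$-algebra of the product topology). Let $\mathcal{F}(\mathcal{B},\lambda)$ be the set of finite rectangles $\prod_{i\in\mathbb{N}}C_{i}$ with $C_i\in\mathcal{B}$ and $\prod_{i}\lambda(C_i)\in[0,\infty)$, with $\mathrm{vol}(\prod_{i}C_i):=\prod_i\lambda(C_i)$. The measure $\mu$ is the restriction to $\mathcal{B}_{\infty}$ of the outer measure $\mu^{\ast}(A):=\inf\{\sum_{n}\mathrm{vol}(\mathscr{C}_{n}) : \mathscr{C}_{n}\in\mathcal{F}(\mathcal{B},\lambda),\ A\subset\bigcup_{n}\mathscr{C}_{n}\}$ ($\inf\varnothing=\infty$). *)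

theory Defs
  imports "HOL-Analysis.Analysis"
begin

text \<open>A point of R^N is a function nat => real; the type nat => real carries the
product topology (instance in HOL-Analysis Function_Topology).\<close>

definition rect :: "(nat \<Rightarrow> real set) \<Rightarrow> (nat \<Rightarrow> real) set" where
  "rect C = {x. \<forall>i. x i \<in> C i}"

text \<open>Infinite product of the Lebesgue measures of the factors, as the limit of
the partial products (in [0,infinity], with 0 * infinity = 0).\<close>
definition vol :: "(nat \<Rightarrow> real set) \<Rightarrow> ennreal" where
  "vol C = lim (\<lambda>n. \<Prod>i<n. emeasure lborel (C i))"

definition fin_rect :: "(nat \<Rightarrow> real set) \<Rightarrow> bool" where
  "fin_rect C \<longleftrightarrow> (\<forall>i. C i \<in> sets borel) \<and>
     (\<exists>v. v < top \<and> ((\<lambda>n. \<Prod>i<n. emeasure lborel (C i)) \<longlongrightarrow> v) sequentially)"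

text \<open>The outer measure mu* (Inf of the empty set is top).\<close>
definition mu_star :: "(nat \<Rightarrow> real) set \<Rightarrow> ennreal" where
  "mu_star A = (INF R \<in> {R :: nat \<Rightarrow> nat \<Rightarrow> real set.
        (\<forall>n. fin_rect (R n)) \<and> A \<subseteq> (\<Union>n. rect (R n))}. (\<Sum>n. vol (R n)))"

definition cylinders :: "(nat \<Rightarrow> real) set set" where
  "cylinders = {rect (\<lambda>i. if i < m then C i else UNIV) | C m.
                  (\<forall>i. C i \<in> sets borel)}"

definition B_inf :: "(nat \<Rightarrow> real) set set" where
  "B_inf = sigma_sets UNIV cylinders"

definition mu :: "(nat \<Rightarrow> real) set \<Rightarrow> ennreal" where
  "mu A = (if A \<in> B_inf then mu_star A else undefined)"

end

theory Submission
  imports Defs "HOL-Probability.Probability"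
begin

lemma open_in_B_inf:
  fixes U :: "(nat \<Rightarrow> real) set"
  assumes "open U"
  shows "U \<in> B_inf"
proof -
  have "U \<in> sets (borel :: (nat \<Rightarrow> real) measure)" using assms by simp
  also have "\<dots> = sets (Pi\<^sub>M UNIV (\<lambda>i::nat. borel :: real measure))"
    by (rule sets_PiM_equal_borel[symmetric])
  also have "\<dots> = sigma_sets UNIV {{f :: nat \<Rightarrow> real. f i \<in> A} | i A. A \<in> sets (borel :: real measure)}"
    unfolding sets_PiM_single by simp
  also have "\<dots> \<subseteq> B_inf"
    unfolding B_inf_def
  proof (rule sigma_sets_mono')
    show "{{f :: nat \<Rightarrow> real. f i \<in> A} | i A. A \<in> sets (borel :: real measure)} \<subseteq> cylinders"
    proof
      fix S assume "S \<in> {{f :: nat \<Rightarrow> real. f i \<in> A} | i A. A \<in> sets (borel :: real measure)}"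
      then obtain i A where S: "S = {f. f i \<in> A}" and A: "A \<in> sets (borel :: real measure)"
        by blast
      define C where "C = (\<lambda>j. if j = i then A else (UNIV :: real set))"
      have "S = rect (\<lambda>j. if j < Suc i then C j else UNIV)"
        unfolding S rect_def C_def by auto
      moreover have "\<forall>j. C j \<in> sets borel" using A unfolding C_def by auto
      ultimately show "S \<in> cylinders" unfolding cylinders_def by blast
    qed
  qed
  finally show ?thesis .
qed

lemma no_cover:
  fixes U :: "(nat \<Rightarrow> real) set" and R :: "nat \<Rightarrow> nat \<Rightarrow> real set"
  assumes U: "open U" and x: "x \<in> U"
    and R: "\<And>n. fin_rect (R n)" and cov: "U \<subseteq> (\<Union>n. rect (R n))"
  shows False
proof -
  have "openin (product_topology (\<lambda>i. euclidean) UNIV) U" using U open_fun_def by auto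
  from product_topology_open_contains_basis[OF this x] obtain X where
    X: "x \<in> Pi\<^sub>E UNIV X" "\<And>i. openin euclidean (X i)"
       "finite {i. X i \<noteq> topspace euclidean}" "Pi\<^sub>E UNIV X \<subseteq> U" by auto
  define F where "F = {i. X i \<noteq> (UNIV :: real set)}"
  have finF: "finite F" using X(3) unfolding F_def by simp
  have "\<forall>i. \<exists>e. 0 < e \<and> e \<le> 1 \<and> {x i - e .. x i + e} \<subseteq> X i \<and> (i \<notin> F \<longrightarrow> e = 1)"
  proof
    fix i
    show "\<exists>e. 0 < e \<and> e \<le> 1 \<and> {x i - e .. x i + e} \<subseteq> X i \<and> (i \<notin> F \<longrightarrow> e = 1)"
    proof (cases "i \<in> F")
      case False
      then show ?thesis unfolding F_def by (intro exI[of _ 1]) auto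
    next
      case True
      have "open (X i)" using X(2) by simp
      moreover have "x i \<in> X i" using X(1) by auto
      ultimately obtain d where d: "d > 0" "cball (x i) d \<subseteq> X i"
        using open_contains_cball by blast
      have "{x i - min d 1 .. x i + min d 1} \<subseteq> cball (x i) d"
        by (auto simp: dist_real_def abs_if)
      then show ?thesis using d True
        by (intro exI[of _ "min d 1"]) auto
    qed
  qed
  then obtain e where e: "\<And>i. 0 < e i" "\<And>i. e i \<le> 1"
     "\<And>i. {x i - e i .. x i + e i} \<subseteq> X i" "\<And>i. i \<notin> F \<Longrightarrow> e i = 1"
    by metis
  define A where "A i = {x i - e i .. x i + e i}" for i
  define M where "M i = uniform_measure lborel (A i)" for i
  have lA: "emeasure lborel (A i) = ennreal (2 * e i)" for i
    unfolding A_def using e(1)[of i] by (simp add: emeasure_lborel_Icc)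
  have probM: "prob_space (M i)" for i
    unfolding M_def using e(1)[of i] lA[of i]
    by (intro prob_space_uniform_measure) auto
  have setsM[simp]: "sets (M i) = sets borel" for i unfolding M_def by simp
  have spaceM[simp]: "space (M i) = UNIV" for i unfolding M_def by simp
  have Aborel[simp]: "A i \<in> sets borel" for i unfolding A_def by simp
  have Acborel[simp]: "- A i \<in> sets borel" for i using Aborel[of i] by (metis Compl_eq_Diff_UNIV sets.compl_sets space_borel)
  define P where "P = Pi\<^sub>M UNIV M"
  interpret P: prob_space P unfolding P_def using probM by (intro prob_space_PiM) auto
  have spaceP: "space P = UNIV" unfolding P_def space_PiM by auto
  have embP: "emeasure P (prod_emb UNIV M J (Pi\<^sub>E J B)) = (\<Prod>i\<in>J. emeasure (M i) (B i))"
    if "finite J" "\<And>i. i \<in> J \<Longrightarrow> B i \<in> sets borel" for J B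
    unfolding P_def using that probM by (intro emeasure_PiM_emb) auto
  have embS: "prod_emb UNIV M J (Pi\<^sub>E J B) \<in> sets P"
    if "finite J" "\<And>i. i \<in> J \<Longrightarrow> B i \<in> sets borel" for J B
    unfolding P_def using that by (intro sets_PiM_I) auto
  have nuM: "emeasure (M i) B \<le> emeasure lborel B * ennreal (1 / (2 * e i))"
    if "B \<in> sets borel" for i B
  proof -
    have "emeasure (M i) B = emeasure lborel (A i \<inter> B) / ennreal (2 * e i)"
      unfolding M_def using that lA[of i] by simp
    also have "\<dots> \<le> emeasure lborel B / ennreal (2 * e i)"
      by (intro divide_right_mono_ennreal emeasure_mono) (use that in auto)
    also have "\<dots> = emeasure lborel B * ennreal (1 / (2 * e i))"
      using e(1)[of i] by (simp add: divide_ennreal_def inverse_ennreal inverse_eq_divide)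
    finally show ?thesis .
  qed
  define w where "w k = (\<Prod>i<k. 1 / (2 * e i))" for k
  obtain N where N: "\<And>i. i \<in> F \<Longrightarrow> i < N"
    using finF finite_nat_bounded by blast
  have wN: "w (j + N) = w N * (1/2) ^ j" for j
  proof (induction j)
    case 0 then show ?case by simp
  next
    case (Suc j)
    have "N + j \<notin> F" using N by force
    then have "e (N + j) = 1" using e(4) by blast
    then show ?case using Suc unfolding w_def by (simp add: add.commute)
  qed
  have "w \<longlonglongrightarrow> 0"
  proof (rule LIMSEQ_offset[where k = N])
    show "(\<lambda>j. w (j + N)) \<longlonglongrightarrow> 0" unfolding wN
      by (intro tendsto_mult_right_zero LIMSEQ_power_zero) auto
  qed
  then have wlim: "(\<lambda>k. ennreal (w k)) \<longlonglongrightarrow> 0"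
    using tendsto_ennrealI by fastforce
  have wprod: "(\<Prod>i<k. ennreal (1 / (2 * e i))) = ennreal (w k)" for k
    unfolding w_def using e(1) by (intro prod_ennreal) (auto intro: less_imp_le)
  have null_rect: "\<exists>Nn \<in> null_sets P. rect (R n) \<subseteq> Nn" for n
  proof -
    define C where "C = R n"
    have Cb: "\<And>i. C i \<in> sets borel" and "\<exists>v. v < top \<and> ((\<lambda>k. \<Prod>i<k. emeasure lborel (C i)) \<longlongrightarrow> v) sequentially"
      using R[of n] unfolding fin_rect_def C_def by auto
    then obtain v where v: "v < top" "((\<lambda>k. \<Prod>i<k. emeasure lborel (C i)) \<longlongrightarrow> v) sequentially"
      by blast
    define E where "E k = prod_emb UNIV M {..<k} (Pi\<^sub>E {..<k} C)" for k
    have Es: "E k \<in> sets P" for k unfolding E_def using Cb by (intro embS) auto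
    have Em: "emeasure P (E k) = (\<Prod>i<k. emeasure (M i) (C i))" for k
      unfolding E_def using Cb by (intro embP) auto
    define Nn where "Nn = (\<Inter>k. E k)"
    have Ns: "Nn \<in> sets P" unfolding Nn_def using Es by auto
    have sub: "rect C \<subseteq> Nn"
      unfolding Nn_def E_def rect_def prod_emb_def by (auto simp: PiE_iff)
    have bound: "emeasure P Nn \<le> (\<Prod>i<k. emeasure lborel (C i)) * ennreal (w k)" for k
    proof -
      have "emeasure P Nn \<le> emeasure P (E k)"
        using Es Ns unfolding Nn_def by (intro emeasure_mono) auto
      also have "\<dots> \<le> (\<Prod>i<k. emeasure lborel (C i) * ennreal (1 / (2 * e i)))"
        unfolding Em by (intro prod_mono_ennreal nuM Cb)
      also have "\<dots> = (\<Prod>i<k. emeasure lborel (C i)) * ennreal (w k)"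
        by (simp add: prod.distrib wprod)
      finally show ?thesis .
    qed
    have lim0: "(\<lambda>k. (\<Prod>i<k. emeasure lborel (C i)) * ennreal (w k)) \<longlonglongrightarrow> v * 0"
      by (rule tendsto_mult_ennreal[OF v(2) wlim]) (use v(1) in auto)
    have "emeasure P Nn \<le> 0"
      using LIMSEQ_le_const[OF lim0, of "emeasure P Nn"] bound by simp
    then have "Nn \<in> null_sets P" using Ns by auto
    then show ?thesis using sub C_def by blast
  qed
  then obtain NR where NR: "\<And>n. NR n \<in> null_sets P" "\<And>n. rect (R n) \<subseteq> NR n" by metis
  define D where "D i = prod_emb UNIV M {i} (Pi\<^sub>E {i} (\<lambda>_. - A i))" for i
  have Dnull: "D i \<in> null_sets P" for i
  proof -
    have "emeasure P (D i) = emeasure (M i) (- A i)"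
      unfolding D_def by (subst embP) auto
    also have "\<dots> = 0" unfolding M_def using lA[of i] e(1)[of i] by simp
    finally show ?thesis unfolding D_def using embS[of "{i}" "\<lambda>_. - A i"] by auto
  qed
  have "UNIV \<subseteq> (\<Union>n. NR n) \<union> (\<Union>i. D i)"
  proof (rule subsetI, rule ccontr)
    fix y :: "nat \<Rightarrow> real"
    assume "y \<notin> (\<Union>n. NR n) \<union> (\<Union>i. D i)"
    then have "\<And>i. y \<notin> D i" "y \<notin> (\<Union>n. NR n)" by auto
    then have "\<And>i. y i \<in> A i" unfolding D_def prod_emb_def by (auto simp: PiE_iff)
    then have "y \<in> Pi\<^sub>E UNIV X" using e(3) unfolding A_def by (auto simp: PiE_iff) (meson atLeastAtMost_iff subsetD)
    then have "y \<in> U" using X(4) by auto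
    then show False using cov NR(2) \<open>y \<notin> (\<Union>n. NR n)\<close> by blast
  qed
  moreover have "(\<Union>n. NR n) \<union> (\<Union>i. D i) \<in> null_sets P"
    using null_sets_UN[of NR, OF NR(1)] null_sets_UN[of D, OF Dnull] by (rule null_sets.Un)
  ultimately have "space P \<in> null_sets P"
    using null_sets_subset[OF _ sets.top[of P]] unfolding spaceP by blast
  then show False using P.emeasure_space_1 by auto
qed

theorem theoremA7:
  fixes U :: "(nat \<Rightarrow> real) set"
  assumes "open U" and "U \<noteq> {}"
  shows "mu U = top"
proof -
  obtain x where x: "x \<in> U" using assms(2) by blast
  have E: "{R :: nat \<Rightarrow> nat \<Rightarrow> real set. (\<forall>n. fin_rect (R n)) \<and> U \<subseteq> (\<Union>n. rect (R n))} = {}"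
    using no_cover[OF assms(1) x] by blast
  have "mu_star U = top" unfolding mu_star_def E by simp
  then show ?thesis unfolding mu_def using open_in_B_inf[OF assms(1)] by simp
qed

end
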